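(* For every $\lambda>0$, the function $\beta\mapsto\tilde\alpha(\beta,\lambda)$ is strictly decreasing on the set $\{\beta>0:\ \lambda+\beta\sqrt{\lambda}\ge 1\}$.
   Context: For $\lambda>0$ and real $n\ge 0$, the continuous Erlang-C function is $\bar\alpha(n,\lambda)=\min\Big\{1,\big[\lambda\int_0^\infty t e^{-\lambda t}(1+t)^{n-1}\,dt\big]^{-1}\Big\}$ (for $n\ge\lambda$ the minimum is attained by the second term; for integer $n>\lambda$ it equals the Erlang-C probability of waiting in an $M/M/n$ queue with arrival rate $\lambda$ and service rate 1). Set $\tilde\alpha(\beta,\lambda)=\bar\alpha(\lambda+\beta\sqrt\lambda,\lambda)$. *)

theory Defs
  imports "HOL-Analysis.Analysis"
begin

text \<open>The integral is the Lebesgue integral over [0, inf) (the integrand is nonnegative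
  and integrable for lam > 0).\<close>
definition alpha_bar :: "real \<Rightarrow> real \<Rightarrow> real" where
  "alpha_bar n lam =
     min 1 (inverse (lam * (LBINT t:{0..}. t * exp (- lam * t) * (1 + t) powr (n - 1))))"

definition alpha_tilde :: "real \<Rightarrow> real \<Rightarrow> real" where
  "alpha_tilde \<beta> lam = alpha_bar (lam + \<beta> * sqrt lam) lam"

end

theory Submission
  imports Defs "HOL-Probability.Sinc_Integral" "HOL-Real_Asymp.Real_Asymp"
begin

lemma ln_bound:
  fixes y K :: real assumes "y > 0" "K > 0"
  shows "ln y \<le> ln K + y / K - 1"
proof -
  have "ln (y / K) \<le> y / K - 1" using assms by (intro ln_le_minus_one) auto
  moreover have "ln (y / K) = ln y - ln K" using assms by (simp add: ln_div)
  ultimately show ?thesis by simp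
qed

lemma integrable_g:
  fixes lam n :: real assumes lam: "lam > 0"
  shows "set_integrable lborel {0<..} (\<lambda>t. t * exp (- lam * t) * (1 + t) powr (n - 1))"
proof -
  define m where "m = \<bar>n\<bar> + 1"
  have m: "m > 0" "n - 1 \<le> m - 1" unfolding m_def by auto
  define K where "K = 2 * m / lam"
  have K: "K > 0" using m lam unfolding K_def by auto
  define C where "C = exp (m * ln K + m / K - m)"
  show ?thesis
  proof (rule set_integrable_bound[where f = "\<lambda>t. C * exp (- (t * (lam/2)))"])
    show "set_integrable lborel {0<..} (\<lambda>t. C * exp (- (t * (lam / 2))))"
      using integrable_I0i_exp_mscale[of "lam/2"] lam by (intro set_integrable_mult_right) auto
    show "set_borel_measurable lborel {0<..} (\<lambda>t. t * exp (- lam * t) * (1 + t) powr (n - 1))"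
      unfolding set_borel_measurable_def by measurable
    show "AE x in lborel. x \<in> {0<..} \<longrightarrow>
        norm (x * exp (- lam * x) * (1 + x) powr (n - 1)) \<le> norm (C * exp (- (x * (lam / 2))))"
    proof (intro AE_I2 impI)
      fix t :: real assume "t \<in> {0<..}"
      then have t: "t > 0" by simp
      have "(1 + t) powr (n - 1) \<le> (1 + t) powr (m - 1)"
        using t m by (intro powr_mono) auto
      have "t * (1 + t) powr (n - 1) \<le> (1 + t) * (1 + t) powr (m - 1)"
        using t \<open>(1 + t) powr (n - 1) \<le> (1 + t) powr (m - 1)\<close>
        by (intro mult_mono) auto
      also have "\<dots> = (1 + t) powr m"
        using t by (simp add: powr_add[symmetric] powr_mult_base)
      also have "\<dots> = exp (m * ln (1 + t))" using t by (simp add: powr_def)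
      also have "\<dots> \<le> exp (m * ln K + m / K - m + m * t / K)"
      proof -
        have "m * ln (1 + t) \<le> m * (ln K + (1 + t) / K - 1)"
          using ln_bound[of "1 + t" K] t K m by (intro mult_left_mono) auto
        also have "\<dots> = m * ln K + m / K - m + m * t / K" using K by (simp add: field_simps)
        finally show ?thesis by simp
      qed
      also have "\<dots> = C * exp (lam * t / 2)"
        unfolding C_def K_def using lam m by (simp add: exp_add[symmetric] field_simps)
      finally have b: "t * (1 + t) powr (n - 1) \<le> C * exp (lam * t / 2)" .
      have "t * exp (- lam * t) * (1 + t) powr (n - 1) = exp (- lam * t) * (t * (1 + t) powr (n - 1))"
        by simp
      also have "\<dots> \<le> exp (- lam * t) * (C * exp (lam * t / 2))"
        using b by (intro mult_left_mono) auto
      also have "\<dots> = C * exp (- (t * (lam / 2)))"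
        by (simp add: exp_add[symmetric] mult_exp_exp field_simps)
      finally show "norm (t * exp (- lam * t) * (1 + t) powr (n - 1)) \<le> norm (C * exp (- (t * (lam / 2))))"
        using t by (simp add: C_def)
    qed
  qed
qed


lemma int_at_lam:
  fixes lam :: real assumes lam: "lam > 0"
  shows "(LBINT t:{0<..}. t * exp (- lam * t) * (1 + t) powr (lam - 1)) = 1 / lam"
proof -
  define F where "F = (\<lambda>t::real. - ((1 + t) powr lam * exp (- lam * t)))"
  define f where "f = (\<lambda>t::real. lam * (t * exp (- lam * t) * (1 + t) powr (lam - 1)))"
  have "(LBINT x=0..\<infinity>. f x) = 0 - (-1)"
  proof (rule interval_integral_FTC_nonneg)
    show "(0::ereal) < \<infinity>" by simp
    fix x :: real assume "0 < ereal x" "ereal x < \<infinity>"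
    then have x: "x > 0" by simp
    have "(F has_real_derivative
        - (lam * (1 + x) powr (lam - 1) * exp (- lam * x) + (1 + x) powr lam * (exp (- lam * x) * (- lam))))
        (at x)"
      unfolding F_def using x
      by (auto intro!: derivative_eq_intros)
    moreover have "- (lam * (1 + x) powr (lam - 1) * exp (- lam * x) + (1 + x) powr lam * (exp (- lam * x) * (- lam)))
        = f x"
    proof -
      have "(1 + x) powr lam = (1 + x) * (1 + x) powr (lam - 1)"
        using x by (simp add: powr_mult_base)
      then show ?thesis unfolding f_def by (simp add: algebra_simps)
    qed
    ultimately show "(F has_real_derivative f x) (at x)" by simp
    show "isCont f x" unfolding f_def using x by (auto intro!: continuous_intros)
  next
    show "AE x in lborel. 0 < ereal x \<longrightarrow> ereal x < \<infinity> \<longrightarrow> 0 \<le> f x"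
      unfolding f_def using lam by (intro AE_I2) auto
    have "(F \<longlongrightarrow> -1) (at_right 0)"
    proof -
      have "isCont F 0" unfolding F_def by (intro continuous_intros) auto
      then have "(F \<longlongrightarrow> F 0) (at 0)" by (simp add: isCont_def)
      then have "(F \<longlongrightarrow> F 0) (at_right 0)" using filterlim_at_split by blast
      moreover have "F 0 = -1" unfolding F_def by simp
      ultimately show ?thesis by simp
    qed
    then show "((F \<circ> real_of_ereal) \<longlongrightarrow> -1) (at_right 0)"
      by (simp add: zero_ereal_def ereal_tendsto_simps)
    have "(F \<longlongrightarrow> 0) at_top" unfolding F_def using lam by real_asymp
    then show "((F \<circ> real_of_ereal) \<longlongrightarrow> 0) (at_left \<infinity>)"
      by (simp add: ereal_tendsto_simps)
  qed
  then have "(LBINT t:{0<..}. f t) = 1" by (simp add: interval_lebesgue_integral_0_infty)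
  then have "lam * (LBINT t:{0<..}. t * exp (- lam * t) * (1 + t) powr (lam - 1)) = 1"
    unfolding f_def by (simp add: set_integral_mult_right)
  then show ?thesis using lam by (simp add: field_simps)
qed

lemma strict_int:
  fixes lam n1 n2 :: real assumes lam: "lam > 0" and n: "n1 < n2"
  shows "(LBINT t:{0<..}. t * exp (- lam * t) * (1 + t) powr (n1 - 1))
       < (LBINT t:{0<..}. t * exp (- lam * t) * (1 + t) powr (n2 - 1))"
proof -
  define h where "h = (\<lambda>t::real. t * exp (- lam * t) * (1 + t) powr (n2 - 1) - t * exp (- lam * t) * (1 + t) powr (n1 - 1))"
  have i1: "set_integrable lborel {0<..} (\<lambda>t. t * exp (- lam * t) * (1 + t) powr (n1 - 1))"
    and i2: "set_integrable lborel {0<..} (\<lambda>t. t * exp (- lam * t) * (1 + t) powr (n2 - 1))"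
    using integrable_g[OF lam] by auto
  have ih: "set_integrable lborel {0<..} h" unfolding h_def by (rule set_integral_diff(1)[OF i2 i1])
  have D: "(LBINT t:{0<..}. h t) = (LBINT t:{0<..}. t * exp (- lam * t) * (1 + t) powr (n2 - 1))
       - (LBINT t:{0<..}. t * exp (- lam * t) * (1 + t) powr (n1 - 1))"
    unfolding h_def by (rule set_integral_diff(2)[OF i2 i1])
  have hpos: "h t > 0" if "t > 0" for t
  proof -
    have "(1 + t) powr (n1 - 1) < (1 + t) powr (n2 - 1)" using n that by (intro powr_less_mono) auto
    moreover have "h t = (t * exp (- lam * t)) * ((1 + t) powr (n2 - 1) - (1 + t) powr (n1 - 1))"
      unfolding h_def by (simp add: right_diff_distrib)
    ultimately show ?thesis using that by simp
  qed
  have int: "integrable lborel (\<lambda>x. indicator {0<..} x *\<^sub>R h x)"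
    using ih by (simp add: set_integrable_def)
  have nn: "AE x in lborel. 0 \<le> indicator {0<..} x *\<^sub>R h x"
    using hpos by (intro AE_I2) (auto simp: indicator_def less_imp_le)
  have "(LBINT t:{0<..}. h t) \<noteq> 0"
  proof
    assume "(LBINT t:{0<..}. h t) = 0"
    then have "AE x in lborel. indicator {0<..} x *\<^sub>R h x = 0"
      using integral_nonneg_eq_0_iff_AE[OF int nn] by (simp add: set_lebesgue_integral_def)
    then have "AE x in lborel. x \<notin> {0<..<1::real}"
      by eventually_elim (auto simp: indicator_def split: if_splits dest: hpos)
    then have "{0<..<1::real} \<in> null_sets lborel" by (subst AE_iff_null_sets) auto
    then have "emeasure lborel {0<..<1::real} = 0" by (auto simp: null_sets_def)
    then show False using emeasure_lborel_Ioo[of 0 "1::real"] by simp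
  qed
  moreover have "(LBINT t:{0<..}. h t) \<ge> 0"
    using integral_nonneg_AE[OF nn] by (simp add: set_lebesgue_integral_def)
  ultimately show ?thesis using D by simp
qed

lemma closed_open:
  fixes lam n :: real
  shows "(LBINT t:{0..}. t * exp (- lam * t) * (1 + t) powr (n - 1))
       = (LBINT t:{0<..}. t * exp (- lam * t) * (1 + t) powr (n - 1))"
proof (rule set_integral_cong_set)
  show "set_borel_measurable lborel {0<..} (\<lambda>t. t * exp (- lam * t) * (1 + t) powr (n - 1))"
    unfolding set_borel_measurable_def by measurable
  show "set_borel_measurable lborel {0..} (\<lambda>t. t * exp (- lam * t) * (1 + t) powr (n - 1))"
    unfolding set_borel_measurable_def by measurable
  show "AE x in lborel. ((x::real) \<in> {0<..}) = (x \<in> {0..})"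
    using AE_lborel_singleton[of 0] by eventually_elim auto
qed

theorem lemma6:
  fixes lam :: real
  assumes "lam > 0"
  shows "strict_antimono_on {\<beta>::real. \<beta> > 0 \<and> lam + \<beta> * sqrt lam \<ge> 1}
           (\<lambda>\<beta>. alpha_tilde \<beta> lam)"
proof (rule monotone_onI)
  fix b1 b2 :: real
  assume b1: "b1 \<in> {\<beta>::real. \<beta> > 0 \<and> lam + \<beta> * sqrt lam \<ge> 1}"
    and b2: "b2 \<in> {\<beta>::real. \<beta> > 0 \<and> lam + \<beta> * sqrt lam \<ge> 1}" and lt: "b1 < b2"
  define I where "I = (\<lambda>n. LBINT t:{0<..}. t * exp (- lam * t) * (1 + t) powr (n - 1))"
  define n1 where "n1 = lam + b1 * sqrt lam"
  define n2 where "n2 = lam + b2 * sqrt lam"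
  have sq: "sqrt lam > 0" using assms by simp
  have n1: "lam < n1" unfolding n1_def using b1 sq by simp
  have n12: "n1 < n2" unfolding n1_def n2_def using lt sq by simp
  have "I lam < I n1" unfolding I_def by (rule strict_int[OF assms n1])
  then have "lam * I lam < lam * I n1" using assms by simp
  moreover have "lam * I lam = 1" using int_at_lam[OF assms] assms unfolding I_def by simp
  ultimately have g1: "lam * I n1 > 1" by simp
  have "I n1 < I n2" unfolding I_def by (rule strict_int[OF assms n12])
  then have g2: "lam * I n1 < lam * I n2" using assms by simp
  have e1: "alpha_tilde b1 lam = min 1 (inverse (lam * I n1))"
    unfolding alpha_tilde_def alpha_bar_def closed_open I_def n1_def ..
  have e2: "alpha_tilde b2 lam = min 1 (inverse (lam * I n2))"
    unfolding alpha_tilde_def alpha_bar_def closed_open I_def n2_def ..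
  have "inverse (lam * I n1) < 1" using less_imp_inverse_less[OF g1] by simp
  then have a1: "alpha_tilde b1 lam = inverse (lam * I n1)" unfolding e1 by simp
  have "inverse (lam * I n2) < 1" using less_imp_inverse_less[of 1 "lam * I n2"] g1 g2 by simp
  then have a2: "alpha_tilde b2 lam = inverse (lam * I n2)" unfolding e2 by simp
  show "alpha_tilde b2 lam < alpha_tilde b1 lam"
    unfolding a1 a2 using g1 g2 by (intro less_imp_inverse_less) auto
qed

end
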